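(* Let $n\geq m\geq 1$ be integers, and let $\mathcal{A}=\{H_1,\ldots,H_m\}$ be a toric arrangement in $(\mathbb{C}^{*})^n$, where $$H_i=\{(z_1,\ldots,z_n)\in(\mathbb{C}^* )^n : z_1^{p_{i,1}}\cdots z_n^{p_{i,n}}=\alpha_i\},\qquad p_{i,j}\in\mathbb{Z},\ \alpha_i\in\mathbb{C}^*,$$ for $1\leq i\leq m$, $1\leq j\leq n$. Let $\tilde{M}_{\mathcal{A}}=(p_{i,j})\in M_{m,n}(\mathbb{Z})$ be its associated matrix. If $\tilde{M}_{\mathcal{A}}$ has rank $m$, then there exists a centered toric arrangement $\mathcal{B}=\{T_1,\ldots,T_m\}$ in $(\mathbb{C}^* )^n$ such that the complement manifolds $M(\mathcal{A})$ and $M(\mathcal{B})$ are diffeomorphic.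
   Context: A toric arrangement in $(\mathbb{C}^* )^n$ is a finite collection of subtori of the form $\{(z_1,\ldots,z_n)\in(\mathbb{C}^* )^n : z_1^{q_1}\cdots z_n^{q_n}=\beta\}$ with $q_j\in\mathbb{Z}$, $\beta\in\mathbb{C}^*$. Its complement manifold $M(\cdot)$ is $(\mathbb{C}^* )^n$ minus the union of its subtori. The associated matrix of the arrangement $\{H_1,\dots,H_m\}$ is the $m\times n$ integer matrix whose $i$-th row is the exponent vector $(p_{i,1},\ldots,p_{i,n})$ of $H_i$. A toric arrangement is centered if all the constants $\beta$ on the right-hand sides of its defining equations equal $1$. *)

theory Defs
  imports "HOL-Analysis.Analysis"
begin

text \<open>Points of (C^*)^n are modelled in complex^'n, 'n a finite index type with CARD('n) = n.
  A family of m hypersurfaces is indexed by a finite type 'm with CARD('m) = m.\<close>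

definition torus :: "(complex ^ 'n) set" where
  "torus = {z. \<forall>j. z $ j \<noteq> 0}"

definition subtorus :: "int ^ 'n \<Rightarrow> complex \<Rightarrow> (complex ^ 'n) set" where
  "subtorus q \<beta> = {z \<in> torus. (\<Prod>j\<in>UNIV. (z $ j) powi (q $ j)) = \<beta>}"

definition complement :: "int ^ 'n ^ 'm \<Rightarrow> ('m \<Rightarrow> complex) \<Rightarrow> (complex ^ 'n) set" where
  "complement P \<alpha> = torus - (\<Union>i. subtorus (P $ i) (\<alpha> i))"

text \<open>Rank of an integer matrix (rank over Q, equivalently over R).\<close>
definition int_matrix_rank :: "int ^ 'n ^ 'm \<Rightarrow> nat" where
  "int_matrix_rank P = rank (\<chi> i j. real_of_int (P $ i $ j))"

inductive_set iter_dir_derivs ::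
  "('a::real_normed_vector \<Rightarrow> 'b::real_normed_vector) \<Rightarrow> 'a set \<Rightarrow> ('a \<Rightarrow> 'b) set"
  for f S where
  base: "f \<in> iter_dir_derivs f S"
| step: "g \<in> iter_dir_derivs f S \<Longrightarrow> (\<forall>x\<in>S. g differentiable (at x)) \<Longrightarrow>
         (\<lambda>x. frechet_derivative g (at x) v) \<in> iter_dir_derivs f S"

text \<open>C^infinity (real sense) on an open set S: all iterated directional derivatives exist.\<close>
definition smooth_on :: "'a set \<Rightarrow> ('a::real_normed_vector \<Rightarrow> 'b::real_normed_vector) \<Rightarrow> bool" where
  "smooth_on S f \<longleftrightarrow> open S \<and> (\<forall>g\<in>iter_dir_derivs f S. \<forall>x\<in>S. g differentiable (at x))"

definition diffeomorphic :: "'a::real_normed_vector set \<Rightarrow> 'b::real_normed_vector set \<Rightarrow> bool" where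
  "diffeomorphic S T \<longleftrightarrow> (\<exists>f g. (\<forall>x\<in>S. f x \<in> T \<and> g (f x) = x) \<and> (\<forall>y\<in>T. g y \<in> S \<and> f (g y) = y)
      \<and> smooth_on S f \<and> smooth_on T g)"

end

theory Submission
  imports Defs
begin

lemma smooth_on_bounded_linear:
  fixes f :: "'a::real_normed_vector \<Rightarrow> 'b::real_normed_vector"
  assumes "bounded_linear f" "open S"
  shows "smooth_on S f"
proof -
  have *: "bounded_linear g \<or> (\<exists>k. g = (\<lambda>_. k))" if "g \<in> iter_dir_derivs f S" for g
    using that
  proof induction
    case base
    then show ?case using assms by blast
  next
    case (step g v)
    show ?case
    proof (cases "bounded_linear g")
      case True
      have "\<And>x. frechet_derivative g (at x) = g"
        using True by (metis bounded_linear_imp_has_derivative frechet_derivative_at)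
      then show ?thesis by auto
    next
      case False
      then obtain k where "g = (\<lambda>_. k)" using step by blast
      then have "\<And>x. frechet_derivative g (at x) = (\<lambda>_. 0)"
        by (metis has_derivative_const frechet_derivative_at)
      then show ?thesis by auto
    qed
  qed
  show ?thesis unfolding smooth_on_def
  proof (intro conjI ballI)
    fix g x assume "g \<in> iter_dir_derivs f S" "x \<in> S"
    from *[OF this(1)] show "g differentiable (at x)"
      by (metis bounded_linear_imp_differentiable differentiable_const)
  qed (use assms in auto)
qed

definition cmul :: "complex ^ 'n \<Rightarrow> complex ^ 'n \<Rightarrow> complex ^ 'n" where
  "cmul c z = (\<chi> j. c $ j * z $ j)"

lemma bounded_linear_cmul: "bounded_linear (cmul c)"
proof -
  have "linear (cmul c)"
    by (rule linearI) (auto simp: cmul_def vec_eq_iff algebra_simps scaleR_conv_of_real)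
  then show ?thesis using linear_conv_bounded_linear by blast
qed

lemma open_torus: "open (torus :: (complex ^ 'n::finite) set)"
proof -
  have e: "torus = (\<Inter>j\<in>UNIV. {z::complex^'n. z $ j \<in> -{0}})" unfolding torus_def by auto
  have "open {z::complex^'n. z $ j \<in> -{0}}" for j
    by (rule open_vimage[of _ "\<lambda>z. z $ j", unfolded vimage_def]) (auto intro: continuous_intros)
  then have "open (\<Inter>j\<in>UNIV. {z::complex^'n. z $ j \<in> -{0}})"
    by (intro open_INT) auto
  then show ?thesis by (subst e)
qed

lemma open_complement:
  fixes P :: "int ^ 'n ^ 'm" and \<alpha> :: "'m \<Rightarrow> complex"
  shows "open (complement P \<alpha>)"
proof -
  define F :: "'m \<Rightarrow> complex^'n \<Rightarrow> complex" where "F i z = (\<Prod>j\<in>UNIV. (z $ j) powi (P $ i $ j))" for i z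
  have e: "complement P \<alpha> = (\<Inter>i\<in>UNIV. torus \<inter> F i -` (-{\<alpha> i}))"
    unfolding complement_def subtorus_def F_def by auto
  have "open (torus \<inter> F i -` (-{\<alpha> i}))" for i
  proof (rule continuous_open_preimage[OF _ open_torus])
    show "continuous_on torus (F i)" unfolding F_def torus_def
      by (auto intro!: continuous_intros)
  qed auto
  then have "open (\<Inter>i\<in>UNIV. torus \<inter> F i -` (-{\<alpha> i}))"
    by (intro open_INT) auto
  then show ?thesis by (subst e)
qed

theorem theorem2p1:
  fixes P :: "int ^ 'n ^ 'm" and \<alpha> :: "'m \<Rightarrow> complex"
  assumes "CARD('m) \<le> CARD('n)"
    and "\<forall>i. \<alpha> i \<noteq> 0"
    and "int_matrix_rank P = CARD('m)"
  shows "\<exists>Q :: int ^ 'n ^ 'm. (\<forall>i. Q $ i \<noteq> 0) \<and>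
           diffeomorphic (complement P \<alpha>) (complement Q (\<lambda>_. 1))"
proof -
  define A where "A = (\<chi> i j. real_of_int (P $ i $ j))"
  have surj: "surj ((*v) A)" using assms(3) full_rank_surjective
    unfolding int_matrix_rank_def A_def by blast
  have rows: "\<forall>i. P $ i \<noteq> 0"
  proof
    fix i
    obtain x where "A *v x = axis i 1" using surj by (metis surjD)
    then have "(A *v x) $ i = 1" by (simp add: axis_def)
    then show "P $ i \<noteq> 0" by (auto simp: A_def matrix_vector_mult_def)
  qed
  obtain x1 where x1: "A *v x1 = (\<chi> i. Re (Ln (\<alpha> i)))" using surj by (metis surjD)
  obtain x2 where x2: "A *v x2 = (\<chi> i. Im (Ln (\<alpha> i)))" using surj by (metis surjD)
  define w :: "complex^'n" where "w = (\<chi> j. Complex (x1 $ j) (x2 $ j))"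
  define c :: "complex^'n" where "c = (\<chi> j. exp (w $ j))"
  have sumw: "(\<Sum>j\<in>UNIV. of_int (P $ i $ j) * w $ j) = Ln (\<alpha> i)" for i
  proof -
    have "Re (\<Sum>j\<in>UNIV. of_int (P $ i $ j) * w $ j) = (A *v x1) $ i"
      by (simp add: A_def w_def matrix_vector_mult_def Re_sum)
    moreover have "Im (\<Sum>j\<in>UNIV. of_int (P $ i $ j) * w $ j) = (A *v x2) $ i"
      by (simp add: A_def w_def matrix_vector_mult_def Im_sum)
    ultimately show ?thesis using x1 x2 by (simp add: complex_eq_iff)
  qed
  have cprod: "(\<Prod>j\<in>UNIV. (c $ j) powi (P $ i $ j)) = \<alpha> i" for i
  proof -
    have "(\<Prod>j\<in>UNIV. (c $ j) powi (P $ i $ j)) = (\<Prod>j\<in>UNIV. exp (of_int (P $ i $ j) * w $ j))"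
      by (simp add: c_def exp_power_int)
    also have "\<dots> = exp (\<Sum>j\<in>UNIV. of_int (P $ i $ j) * w $ j)"
      by (simp add: exp_sum)
    also have "\<dots> = \<alpha> i" using sumw assms(2) by simp
    finally show ?thesis .
  qed
  have cnz: "c $ j \<noteq> 0" for j by (simp add: c_def)
  define ci :: "complex^'n" where "ci = (\<chi> j. inverse (c $ j))"
  have key: "(\<Prod>j\<in>UNIV. (cmul ci z $ j) powi (P $ i $ j)) = (\<Prod>j\<in>UNIV. (z $ j) powi (P $ i $ j)) / \<alpha> i" for z i
  proof -
    have "(\<Prod>j\<in>UNIV. (cmul ci z $ j) powi (P $ i $ j)) = (\<Prod>j\<in>UNIV. (z $ j) powi (P $ i $ j) / (c $ j) powi (P $ i $ j))"
      by (simp add: cmul_def ci_def field_simps power_int_divide_distrib)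
    also have "\<dots> = (\<Prod>j\<in>UNIV. (z $ j) powi (P $ i $ j)) / (\<Prod>j\<in>UNIV. (c $ j) powi (P $ i $ j))"
      by (simp add: prod_dividef)
    finally show ?thesis using cprod by simp
  qed
  have inv1: "cmul c (cmul ci z) = z" for z
    by (simp add: cmul_def ci_def vec_eq_iff cnz)
  have inv2: "cmul ci (cmul c z) = z" for z
    by (simp add: cmul_def ci_def vec_eq_iff cnz)
  have tor1: "cmul ci z \<in> torus \<longleftrightarrow> z \<in> torus" for z
    by (simp add: torus_def cmul_def ci_def cnz)
  have mem: "cmul ci z \<in> complement P (\<lambda>_. 1) \<longleftrightarrow> z \<in> complement P \<alpha>" for z
  proof -
    have "(\<Prod>j\<in>UNIV. (cmul ci z $ j) powi (P $ i $ j)) = 1 \<longleftrightarrow> (\<Prod>j\<in>UNIV. (z $ j) powi (P $ i $ j)) = \<alpha> i" for i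
      using key[of z i] assms(2) by (simp add: divide_eq_1_iff)
    then show ?thesis
      unfolding complement_def subtorus_def using tor1[of z] by auto
  qed
  have sm1: "smooth_on (complement P \<alpha>) (cmul ci)"
    by (intro smooth_on_bounded_linear bounded_linear_cmul open_complement)
  have sm2: "smooth_on (complement P (\<lambda>_. 1)) (cmul c)"
    by (intro smooth_on_bounded_linear bounded_linear_cmul open_complement)
  have "diffeomorphic (complement P \<alpha>) (complement P (\<lambda>_. 1))"
    unfolding diffeomorphic_def
    apply (rule exI[of _ "cmul ci"], rule exI[of _ "cmul c"])
    using mem inv1 inv2 sm1 sm2 by metis
  then show ?thesis using rows by blast
qed

end
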